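(* Let $p$ be a prime and $n$ a positive integer with $p<n$. Then $$\mathcal{Q}_n=\mathcal{M}^n+\big(q_{n,p}G_p(X),\,q_{n,p+1}G_{p+1}(X),\dots,q_{n,n-1}G_{n-1}(X)\big),$$ where for $k=p,\dots,n-1$ the integer $q_{n,k}$ is $p^{\,n-v_p((pk)!)}$ if $v_p((pk)!)<n$ and $1$ otherwise. In particular $\mathcal{M}^n$ is strictly contained in $\mathcal{Q}_n$.
   Context: Fix a prime $p$ and $n\geq1$. $\mathcal{M}=(p,X)\subseteq\mathbb{Z}[X]$ and $\mathcal{Q}_n=\bigcap_{i\in\{0,\dots,p^n-1\},\ p\mid i}(p^n,X-i)$, i.e. the set of $f\in\mathbb{Z}[X]$ with $p^n\mid f(i)$ for every integer $i$ divisible by $p$. For $k\geq1$, $G_k(X)=\prod_{h=0}^{k-1}(X-hp)$, and $G_0(X)=1$. $v_p$ is the $p$-adic valuation. *)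

theory Defs
  imports "HOL-Computational_Algebra.Polynomial" "HOL-Computational_Algebra.Primes"
begin

definition zx_ideal_gen :: "int poly set \<Rightarrow> int poly set" where
  "zx_ideal_gen S = {(\<Sum>i<m. a i * g i) | (m::nat) a g. \<forall>i<m. g i \<in> S}"

definition zx_ideal_mult :: "int poly set \<Rightarrow> int poly set \<Rightarrow> int poly set" where
  "zx_ideal_mult I J = zx_ideal_gen {a * b | a b. a \<in> I \<and> b \<in> J}"

primrec zx_ideal_pow :: "int poly set \<Rightarrow> nat \<Rightarrow> int poly set" where
  "zx_ideal_pow I 0 = UNIV"
| "zx_ideal_pow I (Suc k) = zx_ideal_mult (zx_ideal_pow I k) I"

definition zx_ideal_sum :: "int poly set \<Rightarrow> int poly set \<Rightarrow> int poly set" where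
  "zx_ideal_sum I J = zx_ideal_gen (I \<union> J)"

definition idealM :: "nat \<Rightarrow> int poly set" where
  "idealM p = zx_ideal_gen {[:int p:], [:0, 1:]}"

definition idealQ :: "nat \<Rightarrow> nat \<Rightarrow> int poly set" where
  "idealQ p n = (\<Inter>i \<in> {i. i < p ^ n \<and> p dvd i}. zx_ideal_gen {[:int p ^ n:], [:- int i, 1:]})"

definition G :: "nat \<Rightarrow> nat \<Rightarrow> int poly" where
  "G p k = (\<Prod>h<k. [:- (int h * int p), 1:])"

definition qcoef :: "nat \<Rightarrow> nat \<Rightarrow> nat \<Rightarrow> int" where
  "qcoef p n k = (if multiplicity p (fact (p * k) :: nat) < n
                  then int p ^ (n - multiplicity p (fact (p * k) :: nat)) else 1)"

end

theory Submission
  imports Defs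
begin

definition zid :: "int poly set \<Rightarrow> bool" where
  "zid I \<longleftrightarrow> 0 \<in> I \<and> (\<forall>a\<in>I. \<forall>b\<in>I. a + b \<in> I) \<and> (\<forall>r. \<forall>a\<in>I. r * a \<in> I)"

lemma zid_sum: "zid I \<Longrightarrow> (\<forall>i<(m::nat). f i \<in> I) \<Longrightarrow> (\<Sum>i<m. f i) \<in> I"
  by (induction m) (auto simp: zid_def)

lemma gen_least: "zid I \<Longrightarrow> S \<subseteq> I \<Longrightarrow> zx_ideal_gen S \<subseteq> I"
  unfolding zx_ideal_gen_def
proof clarify
  fix m :: nat and a g assume I: "zid I" "S \<subseteq> I" "\<forall>i<m. g i \<in> S"
  show "(\<Sum>i<m. a i * g i) \<in> I"
    by (rule zid_sum[where f="\<lambda>i. a i * g i"]) (use I in \<open>auto simp: zid_def\<close>)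
qed

lemma gen_zid: "zid (zx_ideal_gen S)"
  unfolding zid_def zx_ideal_gen_def
proof (intro conjI ballI allI)
  show "0 \<in> {\<Sum>i<m. a i * g i |(m::nat) a g. \<forall>i<m. g i \<in> S}"
    by (rule CollectI, rule exI[of _ "0::nat"]) auto
next
  fix x y assume "x \<in> {\<Sum>i<m. a i * g i |(m::nat) a g. \<forall>i<m. g i \<in> S}"
    "y \<in> {\<Sum>i<m. a i * g i |(m::nat) a g. \<forall>i<m. g i \<in> S}"
  then obtain m m' :: nat and a g a' g' where x: "x = (\<Sum>i<m. a i * g i)" "\<forall>i<m. g i \<in> S"
    and y: "y = (\<Sum>i<m'. a' i * g' i)" "\<forall>i<m'. g' i \<in> S" by blast
  define A where "A = (\<lambda>i. if i < m then a i else a' (i - m))"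
  define B where "B = (\<lambda>i. if i < m then g i else g' (i - m))"
  have "(\<Sum>i<m+m'. A i * B i) = (\<Sum>i<m. A i * B i) + (\<Sum>i<m'. A (m+i) * B (m+i))"
    by (induction m') (auto simp: ac_simps)
  also have "\<dots> = x + y" unfolding x y A_def B_def by simp
  finally have "x + y = (\<Sum>i<m+m'. A i * B i)" by simp
  moreover have "\<forall>i<m+m'. B i \<in> S" using x y by (auto simp: B_def)
  ultimately show "x + y \<in> {\<Sum>i<m. a i * g i |(m::nat) a g. \<forall>i<m. g i \<in> S}" by blast
next
  fix r x assume "x \<in> {\<Sum>i<m. a i * g i |(m::nat) a g. \<forall>i<m. g i \<in> S}"
  then obtain m :: nat and a g where x: "x = (\<Sum>i<m. a i * g i)" "\<forall>i<m. g i \<in> S" by blast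
  have "r * x = (\<Sum>i<m. (r * a i) * g i)" by (simp add: x sum_distrib_left ac_simps)
  then show "r * x \<in> {\<Sum>i<m. a i * g i |(m::nat) a g. \<forall>i<m. g i \<in> S}" using x
    by (intro CollectI exI[of _ m] exI[of _ "\<lambda>i. r * a i"] exI[of _ g]) simp
qed

lemma gen_base: "s \<in> S \<Longrightarrow> s \<in> zx_ideal_gen S"
  unfolding zx_ideal_gen_def
  by (rule CollectI, rule exI[of _ 1], rule exI[of _ "\<lambda>_. 1"], rule exI[of _ "\<lambda>_. s"]) auto

lemma zid_add: "zid I \<Longrightarrow> a \<in> I \<Longrightarrow> b \<in> I \<Longrightarrow> a + b \<in> I" by (auto simp: zid_def)
lemma zid_mult: "zid I \<Longrightarrow> a \<in> I \<Longrightarrow> r * a \<in> I" by (auto simp: zid_def)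
lemma zid_mult2: "zid I \<Longrightarrow> a \<in> I \<Longrightarrow> a * r \<in> I" by (metis zid_def mult.commute)
lemma zid_zero: "zid I \<Longrightarrow> 0 \<in> I" by (auto simp: zid_def)
lemma zid_diff: "zid I \<Longrightarrow> a \<in> I \<Longrightarrow> b \<in> I \<Longrightarrow> a - b \<in> I"
  using zid_add[of I a "(-1) * b"] zid_mult[of I b "-1"] by simp

definition Qc :: "nat \<Rightarrow> nat \<Rightarrow> int poly set" where
  "Qc p n = {f. \<forall>j::nat. int p ^ n dvd poly f (int p * int j)}"

lemma zid_Qc: "zid (Qc p n)"
  unfolding zid_def Qc_def by (auto simp: dvd_add)

lemma poly_synth: "poly (f::int poly) x = (x - y) * poly (synthetic_div f y) x + poly f y"
proof -
  have "poly f x = poly ([:-y, 1:] * synthetic_div f y + [:poly f y:]) x"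
    by (simp only: synthetic_div_correct')
  then show ?thesis by (simp add: algebra_simps)
qed

lemma poly_diff_dvd: "(x - y) dvd (poly f x - poly (f::int poly) y)"
  using poly_synth[of f x y] by simp

lemma gen_lin: "f \<in> zx_ideal_gen {[:c:], [:-a,1:]} \<longleftrightarrow> c dvd poly f (a::int)"
proof
  assume "f \<in> zx_ideal_gen {[:c:], [:-a,1:]}"
  moreover have "zx_ideal_gen {[:c:], [:-a,1:]} \<subseteq> {f. c dvd poly f a}"
    by (rule gen_least) (auto simp: zid_def dvd_add)
  ultimately show "c dvd poly f a" by blast
next
  assume "c dvd poly f a"
  then obtain t where t: "poly f a = c * t" by blast
  have "f = [:-a, 1:] * synthetic_div f a + [:poly f a:]"
    by (simp only: synthetic_div_correct')
  also have "\<dots> = synthetic_div f a * [:-a, 1:] + [:t:] * [:c:]"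
    by (simp add: t mult.commute)
  finally have f: "f = synthetic_div f a * [:-a, 1:] + [:t:] * [:c:]" .
  have z: "zid (zx_ideal_gen {[:c:], [:-a,1:]})" by (rule gen_zid)
  show "f \<in> zx_ideal_gen {[:c:], [:-a,1:]}"
    by (subst f, rule zid_add[OF z], rule zid_mult[OF z], rule gen_base, simp, rule zid_mult[OF z], rule gen_base, simp)
qed

lemma idealQ_char:
  assumes "prime p" "0 < n"
  shows "idealQ p n = Qc p n"
proof
  have p0: "p > 0" using assms prime_gt_0_nat by blast
  show "idealQ p n \<subseteq> Qc p n"
  proof
    fix f assume f: "f \<in> idealQ p n"
    show "f \<in> Qc p n" unfolding Qc_def
    proof (rule CollectI, rule allI)
      fix j :: nat
      define i where "i = p * (j mod p ^ (n - 1))"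
      have pn: "p ^ n = p * p ^ (n - 1)" using assms(2) by (cases n) auto
      have "i < p ^ n" unfolding i_def pn using p0 by simp
      moreover have "p dvd i" unfolding i_def by simp
      ultimately have "f \<in> zx_ideal_gen {[:int p ^ n:], [:- int i, 1:]}" using f unfolding idealQ_def by blast
      then have d1: "int p ^ n dvd poly f (int i)" by (simp add: gen_lin)
      have "int p * int j - int i = int p ^ n * int (j div p ^ (n - 1))"
      proof -
        have "j = p ^ (n-1) * (j div p ^ (n - 1)) + j mod p ^ (n-1)" by simp
        then have "p * j = p ^ n * (j div p ^ (n - 1)) + i" unfolding i_def pn
          by (metis add_mult_distrib2 mult.assoc)
        then show ?thesis by (metis add_diff_cancel_right' of_nat_add of_nat_mult of_nat_power)
      qed
      then have "int p ^ n dvd (int p * int j - int i)" by simp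
      then have "int p ^ n dvd (poly f (int p * int j) - poly f (int i))"
        using poly_diff_dvd dvd_trans by blast
      then show "int p ^ n dvd poly f (int p * int j)" using d1
        by (metis diff_add_cancel dvd_add)
    qed
  qed
  show "Qc p n \<subseteq> idealQ p n"
  proof
    fix f assume f: "f \<in> Qc p n"
    show "f \<in> idealQ p n" unfolding idealQ_def
    proof (rule InterI, clarify)
      fix i assume "i < p ^ n" "p dvd i"
      then obtain j where "i = p * j" by blast
      then have "int p ^ n dvd poly f (int i)" using f by (simp add: Qc_def)
      then show "f \<in> zx_ideal_gen {[:int p ^ n:], [:- int i, 1:]}" by (simp add: gen_lin)
    qed
  qed
qed

definition Tn :: "nat \<Rightarrow> nat \<Rightarrow> int poly set" where
  "Tn p n = {f. [:int p ^ n:] dvd pcompose f [:0, int p:]}"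

lemma zid_Tn: "zid (Tn p n)"
  unfolding zid_def Tn_def by (auto simp: pcompose_add pcompose_mult)

lemma Tn_mult: "f \<in> Tn p a \<Longrightarrow> g \<in> Tn p b \<Longrightarrow> f * g \<in> Tn p (a + b)"
proof -
  assume "f \<in> Tn p a" "g \<in> Tn p b"
  then have "[:int p ^ a:] * [:int p ^ b:] dvd pcompose f [:0, int p:] * pcompose g [:0, int p:]"
    unfolding Tn_def by (blast intro: mult_dvd_mono)
  moreover have "[:int p ^ a:] * [:int p ^ b:] = [:int p ^ (a + b):]" by (simp add: power_add)
  ultimately show ?thesis unfolding Tn_def by (simp only: mem_Collect_eq pcompose_mult)
qed

lemma M_Tn1: "idealM p \<subseteq> Tn p 1"
  unfolding idealM_def
proof (rule gen_least[OF zid_Tn], rule subsetI)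
  fix x assume "x \<in> {[:int p:], [:0, 1:]}"
  then have "x = [:int p:] \<or> x = [:0, 1:]" by simp
  then show "x \<in> Tn p 1"
  proof
    assume "x = [:int p:]" then show ?thesis by (simp add: Tn_def)
  next
    assume "x = [:0, 1:]"
    moreover have "[:0, int p:] = [:int p:] * [:0, 1:]" by simp
    then have "[:int p:] dvd [:0, int p:]" by (metis dvd_triv_left)
    ultimately show ?thesis unfolding Tn_def by (simp add: pcompose_pCons)
  qed
qed

lemma zid_pow: "zid (zx_ideal_pow I k)"
proof (cases k)
  case 0 then show ?thesis by (simp add: zid_def)
next
  case (Suc m) then show ?thesis by (simp only: zx_ideal_pow.simps zx_ideal_mult_def gen_zid)
qed

lemma pow_Tn: "zx_ideal_pow (idealM p) k \<subseteq> Tn p k"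
proof (induction k)
  case 0
  then show ?case by (auto simp: Tn_def one_pCons[symmetric])
next
  case (Suc k)
  show ?case unfolding zx_ideal_pow.simps zx_ideal_mult_def
  proof (rule gen_least[OF zid_Tn], clarify)
    fix a b assume "a \<in> zx_ideal_pow (idealM p) k" "b \<in> idealM p"
    then have "a \<in> Tn p k" "b \<in> Tn p 1" using Suc M_Tn1 by blast+
    then show "a * b \<in> Tn p (Suc k)" using Tn_mult[of a p k b 1] by simp
  qed
qed

lemma Tn_Qc: "Tn p n \<subseteq> Qc p n"
proof
  fix f assume "f \<in> Tn p n"
  then obtain h where h: "pcompose f [:0, int p:] = [:int p ^ n:] * h" unfolding Tn_def by blast
  show "f \<in> Qc p n" unfolding Qc_def
  proof (rule CollectI, rule allI)
    fix j :: nat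
    have "poly f (int p * int j) = poly (pcompose f [:0, int p:]) (int j)"
      by (simp add: poly_pcompose mult.commute)
    also have "\<dots> = int p ^ n * poly h (int j)" by (simp add: h)
    finally show "int p ^ n dvd poly f (int p * int j)" by simp
  qed
qed

lemma prod_in_pow: "(\<forall>i<k. x i \<in> I) \<Longrightarrow> (\<Prod>i<k. x i) \<in> zx_ideal_pow I k"
proof (induction k)
  case 0
  then show ?case by simp
next
  case (Suc k)
  then have "(\<Prod>i<k. x i) \<in> zx_ideal_pow I k" "x k \<in> I" by auto
  then show ?case unfolding zx_ideal_pow.simps zx_ideal_mult_def
    by (simp only: prod.lessThan_Suc) (rule gen_base, blast)
qed

lemma p_in_M: "[:int p:] \<in> idealM p"
  unfolding idealM_def by (rule gen_base) simp

lemma lin_in_M: "[:- (int h * int p), 1:] \<in> idealM p"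
proof -
  have z: "zid (idealM p)" unfolding idealM_def by (rule gen_zid)
  have "[:- (int h * int p), 1:] = [:0, 1:] + [:- int h:] * [:int p:]" by simp
  also have "\<dots> \<in> idealM p"
    by (rule zid_add[OF z], unfold idealM_def, rule gen_base, simp,
        rule zid_mult[OF gen_zid], rule gen_base, simp)
  finally show ?thesis .
qed

lemma G_Suc: "G p (Suc k) = G p k * [:-(int k * int p), 1:]"
  by (simp add: G_def)

lemma G_0: "G p 0 = 1" by (simp add: G_def)

lemma G_monic: "degree (G p k) = k \<and> coeff (G p k) k = 1"
proof (induction k)
  case 0 then show ?case by (simp add: G_0)
next
  case (Suc k)
  have nz: "G p k \<noteq> 0" using Suc by auto
  have "degree (G p k * [:-(int k * int p), 1:]) = degree (G p k) + degree [:-(int k * int p), 1:]"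
    by (rule degree_mult_eq) (use nz in auto)
  then have "degree (G p (Suc k)) = Suc k" using Suc by (simp add: G_Suc)
  moreover have "lead_coeff (G p (Suc k)) = 1"
    using Suc by (simp only: G_Suc lead_coeff_mult) simp
  ultimately show ?case by simp
qed

lemma G_split: "n \<le> k \<Longrightarrow> G p k = G p n * (\<Prod>h\<in>{n..<k}. [:- (int h * int p), 1:])"
  unfolding G_def by (metis atLeast0LessThan prod.atLeastLessThan_concat zero_le)

lemma G_in_pow: "n \<le> k \<Longrightarrow> G p k \<in> zx_ideal_pow (idealM p) n"
proof -
  assume "n \<le> k"
  have "G p n \<in> zx_ideal_pow (idealM p) n" unfolding G_def
    by (rule prod_in_pow) (simp add: lin_in_M)
  then show ?thesis using G_split[OF \<open>n \<le> k\<close>, of p] zid_mult2[OF zid_pow] by metis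
qed

lemma pG_in_pow: "k \<le> n \<Longrightarrow> smult (int p ^ (n - k)) (G p k) \<in> zx_ideal_pow (idealM p) n"
proof -
  assume kn: "k \<le> n"
  define x where "x = (\<lambda>i. if i < k then [:- (int i * int p), 1:] else [:int p:])"
  have "(\<Prod>i<n. x i) \<in> zx_ideal_pow (idealM p) n"
    by (rule prod_in_pow) (simp add: x_def lin_in_M p_in_M)
  moreover have "(\<Prod>i<n. x i) = (\<Prod>i<k. x i) * (\<Prod>i\<in>{k..<n}. x i)"
    using kn by (metis atLeast0LessThan prod.atLeastLessThan_concat zero_le)
  moreover have "(\<Prod>i<k. x i) = G p k" unfolding G_def x_def by (rule prod.cong) auto
  moreover have "(\<Prod>i\<in>{k..<n}. x i) = [:int p ^ (n - k):]"
  proof -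
    have "(\<Prod>i\<in>{k..<n}. x i) = (\<Prod>i\<in>{k..<n}. [:int p:])" unfolding x_def by (rule prod.cong) auto
    also have "\<dots> = [:int p:] ^ (n - k)" by simp
    also have "\<dots> = [:int p ^ (n - k):]" by (simp add: poly_const_pow)
    finally show ?thesis .
  qed
  ultimately show ?thesis by (simp add: mult.commute)
qed

lemma poly_G: "poly (G p i) (int p * int k) = int p ^ i * (\<Prod>h<i. (int k - int h))"
proof -
  have "poly (G p i) (int p * int k) = (\<Prod>h<i. int p * (int k - int h))"
    unfolding G_def by (simp add: poly_prod algebra_simps)
  also have "\<dots> = int p ^ i * (\<Prod>h<i. (int k - int h))" by (simp add: prod.distrib)
  finally show ?thesis .
qed

lemma ffact_eq: "i \<le> k \<Longrightarrow> (\<Prod>h<i. (int k - int h)) = int (fact i * (k choose i))"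
proof (induction i)
  case 0 then show ?case by simp
next
  case (Suc i)
  then have "(\<Prod>h<Suc i. (int k - int h)) = int (fact i * (k choose i)) * int (k - i)" by simp
  also have "\<dots> = int (fact i * ((k - i) * (k choose i)))" by simp
  also have "(k - i) * (k choose i) = Suc i * (k choose Suc i)"
    by (metis binomial_absorption binomial_absorb_comp)
  also have "int (fact i * (Suc i * (k choose Suc i))) = int (fact (Suc i) * (k choose Suc i))"
    by (simp only: fact_Suc of_nat_id mult_ac)
  finally show ?case .
qed

lemma fact_dvd_ffact: "int (fact i) dvd (\<Prod>h<i. (int k - int h))"
proof (cases "i \<le> k")
  case True then show ?thesis by (simp add: ffact_eq)
next
  case False
  then have "(\<Prod>h<i. (int k - int h)) = 0" by (intro prod_zero) auto
  then show ?thesis by (metis dvd_0_right)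
qed

lemma fact_inner:
  assumes "prime p" "r < p"
  shows "\<exists>w. fact (p * k + r) = fact (p * k) * w \<and> \<not> p dvd w"
  using assms(2)
proof (induction r)
  case 0 then show ?case using prime_gt_1_nat[OF assms(1)] by (intro exI[of _ 1]) simp
next
  case (Suc r)
  then obtain w where w: "fact (p * k + r) = fact (p * k) * w" "\<not> p dvd w" by auto
  have "\<not> p dvd (p * k + Suc r)"
  proof
    assume "p dvd (p * k + Suc r)"
    then have "p dvd Suc r" by (metis add_Suc_right dvd_add_right_iff dvd_triv_left)
    then show False using Suc.prems by (auto dest: dvd_imp_le)
  qed
  then have "\<not> p dvd (p * k + Suc r) * w" using w(2) assms(1) prime_dvd_mult_iff by blast
  moreover have "fact (p * k + Suc r) = fact (p * k) * ((p * k + Suc r) * w)"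
    using w(1) by (simp add: fact_Suc algebra_simps)
  ultimately show ?case by blast
qed

lemma fact_pk:
  assumes "prime p"
  shows "\<exists>u. fact (p * k) = p ^ k * fact k * u \<and> \<not> p dvd u"
proof (induction k)
  case 0 then show ?case using prime_gt_1_nat[OF assms] by (intro exI[of _ 1]) simp
next
  case (Suc k)
  then obtain u where u: "fact (p * k) = p ^ k * fact k * u" "\<not> p dvd u" by auto
  have p1: "p \<ge> 1" using assms prime_gt_0_nat by (simp add: Suc_leI)
  obtain w where w: "fact (p * k + (p - 1)) = fact (p * k) * w" "\<not> p dvd w"
    using fact_inner[OF assms, of "p - 1" k] p1 by auto
  have e: "p * Suc k = Suc (p * k + (p - 1))" using p1 by simp
  have "fact (p * Suc k) = (Suc (p * k + (p - 1))) * fact (p * k + (p - 1))"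
    by (simp only: e fact_Suc of_nat_id)
  also have "\<dots> = (p * Suc k) * fact (p * k + (p - 1))" by (simp only: e)
  also have "\<dots> = p ^ Suc k * fact (Suc k) * (u * w)"
    by (simp only: w(1) u(1)) (simp add: algebra_simps fact_Suc)
  finally show ?case using u(2) w(2) assms by (intro exI[of _ "u * w"]) (simp add: prime_dvd_mult_iff)
qed

lemma newton_aux: "degree f \<le> d \<Longrightarrow> \<exists>c. f = (\<Sum>k<Suc d. smult (c k) (G p k))"
proof (induction d arbitrary: f)
  case 0
  then have "f = [:coeff f 0:]" by (metis degree_0_id le_zero_eq)
  then show ?case by (intro exI[of _ "\<lambda>_. coeff f 0"]) (simp add: G_0)
next
  case (Suc d)
  define g where "g = f - smult (coeff f (Suc d)) (G p (Suc d))"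
  have "degree g \<le> d"
  proof (rule degree_le, intro allI impI)
    fix i assume "d < i"
    show "coeff g i = 0"
    proof (cases "i = Suc d")
      case True then show ?thesis using G_monic[of p "Suc d"] by (simp add: g_def)
    next
      case False
      then have "i > degree f" "i > degree (G p (Suc d))" using \<open>d < i\<close> Suc.prems G_monic[of p "Suc d"] by auto
      then show ?thesis by (simp add: g_def coeff_eq_0)
    qed
  qed
  then obtain c where c: "g = (\<Sum>k<Suc d. smult (c k) (G p k))" using Suc.IH by blast
  define c' where "c' = c(Suc d := coeff f (Suc d))"
  have "f = g + smult (coeff f (Suc d)) (G p (Suc d))" by (simp add: g_def)
  also have "\<dots> = (\<Sum>k<Suc (Suc d). smult (c' k) (G p k))"
    unfolding c by (simp add: c'_def)
  finally show ?case by blast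
qed

lemma V12:
  fixes k :: nat
  assumes "prime p"
  defines "v \<equiv> multiplicity p (fact (p * k) :: nat)"
  shows "p ^ v dvd p ^ k * fact k" "\<not> p ^ Suc v dvd p ^ k * fact k"
proof -
  obtain u where u: "fact (p * k) = p ^ k * fact k * u" "\<not> p dvd u" using fact_pk[OF assms(1)] by blast
  have cop: "coprime (p ^ v) u" using prime_imp_coprime[OF assms(1) u(2)] by simp
  have "p ^ v dvd p ^ k * fact k * u" unfolding v_def u(1)[symmetric] by (rule multiplicity_dvd)
  then show "p ^ v dvd p ^ k * fact k" using coprime_dvd_mult_left_iff[OF cop] by blast
  show "\<not> p ^ Suc v dvd p ^ k * fact k"
  proof
    assume "p ^ Suc v dvd p ^ k * fact k"
    then have "p ^ Suc v dvd fact (p * k)" unfolding u(1) by (rule dvd_mult2)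
    moreover have "fact (p * k) \<noteq> (0::nat)" by simp
    moreover have "\<not> is_unit p" using prime_gt_1_nat[OF assms(1)] by simp
    ultimately have "Suc v \<le> v" unfolding v_def by (metis multiplicity_geI)
    then show False by simp
  qed
qed

lemma pow_cancel:
  fixes y :: int
  assumes "prime p" "a < b" "int p ^ b dvd int p ^ a * y"
  shows "int p dvd y"
proof -
  have h: "int p ^ Suc a dvd int p ^ b" by (rule le_imp_power_dvd) (use assms(2) in simp)
  have "int p ^ Suc a dvd int p ^ a * y" using dvd_trans[OF h assms(3)] .
  then have "int p ^ a * int p dvd int p ^ a * y" by (simp only: power_Suc2)
  moreover have "int p ^ a \<noteq> 0" using assms(1) prime_gt_0_nat by simp
  ultimately show ?thesis using dvd_times_left_cancel_iff by blast
qed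

lemma qcoef_gen:
  assumes "prime p"
  shows "int p ^ n dvd qcoef p n k * (int p ^ k * fact k)"
proof -
  define v where "v = multiplicity p (fact (p * k) :: nat)"
  have "int (p ^ v) dvd int (p ^ k * fact k)" using V12(1)[OF assms, of k] unfolding v_def
    by (simp only: int_dvd_int_iff)
  then have d: "int p ^ v dvd int p ^ k * fact k" by simp
  show ?thesis
  proof (cases "v < n")
    case True
    then have "qcoef p n k = int p ^ (n - v)" by (simp add: qcoef_def v_def)
    moreover have "int p ^ n = int p ^ (n - v) * int p ^ v" using True by (simp add: power_add[symmetric])
    ultimately show ?thesis using d by (simp add: mult_dvd_mono)
  next
    case False
    then have "qcoef p n k = 1" by (simp add: qcoef_def v_def)
    moreover have "int p ^ n dvd int p ^ v" using False by (simp add: le_imp_power_dvd)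
    ultimately show ?thesis using d dvd_trans by auto
  qed
qed

lemma qcoef_div:
  assumes "prime p" "int p ^ n dvd c * (int p ^ k * fact k)"
  shows "\<exists>t. c = qcoef p n k * t"
proof -
  define v where "v = multiplicity p (fact (p * k) :: nat)"
  show ?thesis
  proof (cases "v < n")
    case False
    then have "qcoef p n k = 1" by (simp add: qcoef_def v_def)
    then show ?thesis by simp
  next
    case True
    then have q: "qcoef p n k = int p ^ (n - v)" by (simp add: qcoef_def v_def)
    obtain y where y: "p ^ k * fact k = p ^ v * y" using V12(1)[OF assms(1), of k] unfolding v_def by blast
    have ny: "\<not> p dvd y"
    proof
      assume "p dvd y"
      then have "p ^ Suc v dvd p ^ k * fact k" unfolding y by (simp add: mult_dvd_mono)
      then show False using V12(2)[OF assms(1), of k] unfolding v_def by blast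
    qed
    have yi: "int p ^ k * fact k = int p ^ v * int y"
      using arg_cong[OF y, of int] by simp
    have "coprime (int p ^ n) (int y)"
      using prime_imp_coprime[of "int p" "int y"] assms(1) ny by simp
    moreover have "int p ^ n dvd (c * int p ^ v) * int y" using assms(2) yi by (simp add: mult_ac)
    ultimately have "int p ^ n dvd c * int p ^ v" using coprime_dvd_mult_left_iff by blast
    moreover have "int p ^ n = int p ^ (n - v) * int p ^ v" using True by (simp add: power_add[symmetric])
    moreover have "int p ^ v \<noteq> 0" using assms(1) prime_gt_0_nat by simp
    ultimately have "int p ^ (n - v) dvd c" using assms(1) prime_gt_0_nat by simp
    then show ?thesis using q by (auto simp: dvd_def)
  qed
qed

lemma qcoef_small:
  assumes "prime p" "k < p" "k < n"
  shows "qcoef p n k = int p ^ (n - k)"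
proof -
  define v where "v = multiplicity p (fact (p * k) :: nat)"
  have nf: "\<not> p dvd fact k" using assms prime_dvd_fact_iff by auto
  have "v = k"
  proof (rule antisym)
    show "v \<le> k"
    proof (rule ccontr)
      assume "\<not> v \<le> k"
      then have "p ^ Suc k dvd p ^ v" by (intro le_imp_power_dvd) simp
      then have "p ^ k * p dvd p ^ k * fact k" using V12(1)[OF assms(1), of k] unfolding v_def
        by (simp add: dvd_trans mult.commute)
      then have "p dvd fact k" using assms(1) prime_gt_0_nat by simp
      then show False using nf by simp
    qed
    obtain u where u: "fact (p * k) = p ^ k * fact k * u" "\<not> p dvd u" using fact_pk[OF assms(1)] by blast
    have h: "p ^ k dvd fact (p * k)" unfolding u(1) by simp
    show "k \<le> v" unfolding v_def
      by (rule multiplicity_geI[OF _ _ h]) (use prime_gt_1_nat[OF assms(1)] in auto)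
  qed
  then show ?thesis using assms by (simp add: qcoef_def v_def)
qed

lemma key_div:
  assumes "f = (\<Sum>k<N. smult (c k) (G p k))" "f \<in> Qc p n"
  shows "k < N \<Longrightarrow> int p ^ n dvd c k * (int p ^ k * fact k)"
proof (induction k rule: less_induct)
  case (less k)
  define t where "t i = c i * (int p ^ i * (\<Prod>h<i. (int k - int h)))" for i
  have ev: "poly f (int p * int k) = (\<Sum>i<N. t i)"
    using assms(1) by (simp add: poly_sum poly_G t_def)
  have rest: "int p ^ n dvd t i" if "i \<in> {..<N} - {k}" for i
  proof (cases "i < k")
    case True
    then have "int p ^ n dvd c i * (int p ^ i * fact i)" using less.IH that by auto
    moreover have "c i * (int p ^ i * fact i) dvd t i" unfolding t_def
      using fact_dvd_ffact[of i k] by (intro mult_dvd_mono) auto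
    ultimately show ?thesis by (rule dvd_trans)
  next
    case False
    then have "k < i" using that by auto
    then have "(\<Prod>h<i. (int k - int h)) = 0" by (intro prod_zero) auto
    then have "t i = 0" by (simp add: t_def)
    then show ?thesis by (metis dvd_0_right)
  qed
  have "(\<Sum>i<N. t i) = t k + (\<Sum>i\<in>{..<N} - {k}. t i)"
    using less.prems by (simp add: sum.remove)
  moreover have "int p ^ n dvd (\<Sum>i\<in>{..<N} - {k}. t i)" using rest by (intro dvd_sum) auto
  moreover have "int p ^ n dvd poly f (int p * int k)" using assms(2) by (simp add: Qc_def)
  ultimately have "int p ^ n dvd t k" using ev by (metis add_diff_cancel_right' dvd_diff)
  moreover have "t k = c k * (int p ^ k * fact k)" unfolding t_def using ffact_eq[of k k] by simp
  ultimately show ?case by simp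
qed

lemma gen_Qc:
  assumes "prime p"
  shows "smult (qcoef p n k) (G p k) \<in> Qc p n"
  unfolding Qc_def
proof (rule CollectI, rule allI)
  fix j :: nat
  have "poly (smult (qcoef p n k) (G p k)) (int p * int j) = qcoef p n k * (int p ^ k * (\<Prod>h<k. (int j - int h)))"
    by (simp add: poly_G)
  moreover have "qcoef p n k * (int p ^ k * fact k) dvd qcoef p n k * (int p ^ k * (\<Prod>h<k. (int j - int h)))"
    using fact_dvd_ffact[of k j] by (intro mult_dvd_mono) auto
  ultimately show "int p ^ n dvd poly (smult (qcoef p n k) (G p k)) (int p * int j)"
    using qcoef_gen[OF assms, of n k] dvd_trans by metis
qed

lemma witness_notin:
  assumes "prime p" "p < n"
  shows "smult (qcoef p n p) (G p p) \<notin> Tn p n"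
proof
  assume mem: "smult (qcoef p n p) (G p p) \<in> Tn p n"
  obtain p' where pp: "p = Suc p'" using prime_gt_0_nat[OF assms(1)] gr0_implies_Suc by blast
  define R where "R = (\<Prod>i<p'. [:-(int (Suc i) * int p), 1:])"
  define y where "y = (\<Prod>i<p'. - int (Suc i))"
  have GR: "G p p = [:0, 1:] * R" unfolding G_def R_def
    by (subst pp, subst prod.lessThan_Suc_shift) simp
  have "coeff (G p p) 1 = poly R 0" unfolding GR by (simp add: poly_0_coeff_0)
  also have "\<dots> = (\<Prod>i<p'. int p * (- int (Suc i)))" unfolding R_def by (simp add: poly_prod) (rule prod.cong, auto simp: algebra_simps)
  also have "\<dots> = int p ^ p' * y" unfolding y_def by (simp add: prod.distrib)
  finally have cG: "coeff (G p p) 1 = int p ^ p' * y" .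
  have ny: "\<not> int p dvd y"
  proof
    assume "int p dvd y"
    then obtain i where "i < p'" "int p dvd - int (Suc i)"
      unfolding y_def using prime_dvd_prod_iff[of "{..<p'}" "int p"] assms(1) by auto
    then have "int p dvd int (Suc i)" by (simp only: dvd_minus_iff)
    then have "p dvd Suc i" by (simp only: int_dvd_int_iff)
    then show False using \<open>i < p'\<close> pp by (auto dest: dvd_imp_le)
  qed
  from mem have "int p ^ n dvd coeff (pcompose (smult (qcoef p n p) (G p p)) [:0, int p:]) 1"
    unfolding Tn_def const_poly_dvd_iff by blast
  moreover have "coeff (pcompose (smult (qcoef p n p) (G p p)) [:0, int p:]) 1
      = int p * (qcoef p n p * (int p ^ p' * y))" using cG by (simp add: coeff_pcompose_linear One_nat_def[symmetric] del: One_nat_def)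
  moreover have "int p * (qcoef p n p * (int p ^ p' * y)) = qcoef p n p * (int p ^ p * y)"
    unfolding pp by (simp add: mult_ac)
  ultimately have d: "int p ^ n dvd qcoef p n p * (int p ^ p * y)" by simp
  define v where "v = multiplicity p (fact (p * p) :: nat)"
  have vge: "Suc p \<le> v"
  proof -
    obtain u where u: "fact (p * p) = p ^ p * fact p * u" "\<not> p dvd u" using fact_pk[OF assms(1)] by blast
    have "p dvd fact p" using prime_dvd_fact_iff[OF assms(1)] by simp
    then have "p ^ p * p dvd p ^ p * fact p" by simp
    then have h: "p ^ Suc p dvd fact (p * p)" unfolding u(1) by (simp add: mult.commute dvd_mult2)
    show ?thesis unfolding v_def
      by (rule multiplicity_geI[OF _ _ h]) (use prime_gt_1_nat[OF assms(1)] in auto)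
  qed
  show False
  proof (cases "v < n")
    case True
    then have "qcoef p n p = int p ^ (n - v)" by (simp add: qcoef_def v_def)
    then have "int p ^ n dvd int p ^ (n - v + p) * y" using d by (simp add: power_add mult_ac)
    moreover have "n - v + p < n" using True vge by simp
    ultimately show False using pow_cancel[OF assms(1)] ny by blast
  next
    case False
    then have "qcoef p n p = 1" by (simp add: qcoef_def v_def)
    then show False using d pow_cancel[OF assms(1) assms(2)] ny by simp
  qed
qed

theorem mainTheorem15:
  fixes p n :: nat
  assumes "prime p" and "0 < n" and "p < n"
  shows "idealQ p n = zx_ideal_sum (zx_ideal_pow (idealM p) n)
                        (zx_ideal_gen {smult (qcoef p n k) (G p k) | k. p \<le> k \<and> k \<le> n - 1})
         \<and> zx_ideal_pow (idealM p) n \<subset> idealQ p n"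
proof -
  define Js where "Js = {smult (qcoef p n k) (G p k) | k. p \<le> k \<and> k \<le> n - 1}"
  define P where "P = zx_ideal_pow (idealM p) n"
  define R where "R = zx_ideal_sum P (zx_ideal_gen Js)"
  have zR: "zid R" unfolding R_def zx_ideal_sum_def by (rule gen_zid)
  have PR: "x \<in> R" if "x \<in> P" for x unfolding R_def zx_ideal_sum_def using that by (intro gen_base) auto
  have JR: "x \<in> R" if "x \<in> Js" for x unfolding R_def zx_ideal_sum_def
    using that by (intro gen_base UnI2 gen_base)
  have PQ: "P \<subseteq> Qc p n" unfolding P_def using pow_Tn Tn_Qc by blast
  have QR: "Qc p n \<subseteq> R"
  proof
    fix f assume f: "f \<in> Qc p n"
    obtain c where c: "f = (\<Sum>k<Suc (degree f). smult (c k) (G p k))"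
      using newton_aux[of f "degree f" p] by blast
    have "smult (c k) (G p k) \<in> R" if k: "k < Suc (degree f)" for k
    proof -
      have dv: "int p ^ n dvd c k * (int p ^ k * fact k)" using key_div[OF c f k] .
      show ?thesis
      proof (cases "n \<le> k")
        case True
        then have "G p k \<in> R" using G_in_pow PR unfolding P_def by blast
        then show ?thesis using zid_mult[OF zR, of "G p k" "[:c k:]"] by simp
      next
        case False
        obtain t where t: "c k = qcoef p n k * t" using qcoef_div[OF assms(1) dv] by blast
        have "smult (qcoef p n k) (G p k) \<in> R"
        proof (cases "p \<le> k")
          case True
          then show ?thesis using False by (intro JR) (auto simp: Js_def)
        next
          case False': False
          then have "qcoef p n k = int p ^ (n - k)" using qcoef_small[OF assms(1)] False by simp
          then show ?thesis using pG_in_pow[of k n p] False PR unfolding P_def by simp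
        qed
        then have "[:t:] * smult (qcoef p n k) (G p k) \<in> R" by (rule zid_mult[OF zR])
        then show ?thesis by (simp add: t mult.commute)
      qed
    qed
    then show "f \<in> R" by (subst c, intro zid_sum[OF zR]) auto
  qed
  have RQ: "R \<subseteq> Qc p n"
    unfolding R_def zx_ideal_sum_def
  proof (rule gen_least[OF zid_Qc], rule Un_least)
    show "P \<subseteq> Qc p n" by (rule PQ)
    show "zx_ideal_gen Js \<subseteq> Qc p n"
      by (rule gen_least[OF zid_Qc]) (auto simp: Js_def gen_Qc[OF assms(1)])
  qed
  have Q: "idealQ p n = Qc p n" using idealQ_char[OF assms(1,2)] .
  have w: "smult (qcoef p n p) (G p p) \<in> Qc p n" by (rule gen_Qc[OF assms(1)])
  have "smult (qcoef p n p) (G p p) \<notin> P" using witness_notin[OF assms(1,3)] pow_Tn unfolding P_def by blast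
  then have "P \<subset> Qc p n" using PQ w by blast
  then show ?thesis using QR RQ Q unfolding R_def Js_def P_def by blast
qed

end
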